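(* Let $u\in(0,\frac12)$ and let $\{p_i\}_{i\in\mathcal{I}}$ be a finite nonempty family with $p_i\in[u,\frac12]$ for all $i\in\mathcal{I}$. Then $$\frac{\sqrt{\sum_{i\in\mathcal{I}}p_i^3(1-p_i)}}{\sum_{i\in\mathcal{I}}p_i(1-p_i)}\le\frac{1+2u+4u^2-8u^3}{\sqrt{16|\mathcal{I}|\,u\,(1-u-4u^2+4u^3)}}.$$ *)

theory Defs
  imports Complex_Main
begin

end

theory Submission
  imports Defs
begin
lemma pointwise:
  fixes u p :: real
  assumes "0 < u" "u < 1/2" "u \<le> p" "p \<le> 1/2"
  shows "4*(1-2*u) * (p^3*(1-p)) \<le> (1 + 2*u + 4*u^2 - 8*u^3) * (p*(1-p)) - u*(1-u)*(1+2*u)"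
proof -
  have r: "-4*(1-2*u)*p^2 + 2*(1-2*u)^2*p + 2*(1-u)*(1+2*u) \<ge> 0"
  proof -
    have "p*p \<le> (1/2)*(1/2)" using assms by (intro mult_mono) auto
    hence p2: "p^2 \<le> 1/4" by (simp add: power2_eq_square)
    have "(1-2*u)*p^2 \<le> (1-2*u)*(1/4)" using assms p2 by (intro mult_left_mono) auto
    moreover have "2*(1-2*u)^2*p \<ge> 0" using assms by simp
    moreover have "u*u < u*1" using assms by (intro mult_strict_left_mono) auto
    ultimately show ?thesis by (simp add: algebra_simps power2_eq_square)
  qed
  have "(1 + 2*u + 4*u^2 - 8*u^3) * (p*(1-p)) - u*(1-u)*(1+2*u) - 4*(1-2*u) * (p^3*(1-p))
      = (p-u)*(1/2-p)*(-4*(1-2*u)*p^2 + 2*(1-2*u)^2*p + 2*(1-u)*(1+2*u))"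
    by (simp add: field_simps power2_eq_square power3_eq_cube)
  moreover have "(p-u)*(1/2-p)*(-4*(1-2*u)*p^2 + 2*(1-2*u)^2*p + 2*(1-u)*(1+2*u)) \<ge> 0"
    using assms r by (intro mult_nonneg_nonneg) auto
  ultimately show ?thesis by linarith
qed
theorem mainTheorem14:
  fixes u :: real and I :: "'a set" and p :: "'a \<Rightarrow> real"
  assumes "0 < u" and "u < 1/2"
    and "finite I" and "I \<noteq> {}"
    and "\<And>i. i \<in> I \<Longrightarrow> u \<le> p i \<and> p i \<le> 1/2"
  shows "sqrt (\<Sum>i\<in>I. (p i)^3 * (1 - p i)) / (\<Sum>i\<in>I. p i * (1 - p i))
    \<le> (1 + 2*u + 4*u^2 - 8*u^3) / sqrt (16 * real (card I) * u * (1 - u - 4*u^2 + 4*u^3))"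
proof -
  define S3 where "S3 = (\<Sum>i\<in>I. (p i)^3 * (1 - p i))"
  define S where "S = (\<Sum>i\<in>I. p i * (1 - p i))"
  define K where "K = 1 + 2*u + 4*u^2 - 8*u^3"
  define C where "C = u*(1-u)*(1+2*u)"
  define n where "n = real (card I)"
  have n: "n > 0" using assms n_def card_gt_0_iff by auto
  have C: "C > 0" using assms C_def by simp
  have K: "K > 0"
  proof -
    have "u^2*(2*u) \<le> u^2*1" using assms by (intro mult_left_mono) auto
    hence "8*u^3 \<le> 4 * u^2" by (simp add: power2_eq_square power3_eq_cube)
    thus ?thesis unfolding K_def using assms by linarith
  qed
  have pos: "\<And>i. i \<in> I \<Longrightarrow> p i * (1 - p i) > 0" using assms(5) assms(1) by force
  have Spos: "S > 0" unfolding S_def using assms(3,4) pos by (simp add: sum_pos)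
  have S3nn: "S3 \<ge> 0" unfolding S3_def using assms(5) assms(1)
    by (intro sum_nonneg mult_nonneg_nonneg) force+
  have key: "4*(1-2*u) * S3 \<le> K * S - n * C"
  proof -
    have "4*(1-2*u) * S3 = (\<Sum>i\<in>I. 4*(1-2*u) * ((p i)^3 * (1 - p i)))"
      unfolding S3_def by (simp add: sum_distrib_left)
    also have "\<dots> \<le> (\<Sum>i\<in>I. K * (p i*(1-p i)) - C)"
      using pointwise assms unfolding K_def C_def by (intro sum_mono) auto
    also have "\<dots> = K * S - n * C"
      unfolding S_def n_def by (simp add: sum_subtractf sum_distrib_left)
    finally show ?thesis .
  qed
  define D where "D = 16 * n * u * (1 - u - 4*u^2 + 4*u^3)"
  have Deq: "D = 16 * n * (1-2*u) * C" unfolding D_def C_def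
    by (simp add: field_simps power2_eq_square power3_eq_cube)
  have Dpos: "D > 0" using Deq n C assms by simp
  have "S3 * D = 4*n*C * (4*(1-2*u)*S3)" unfolding Deq by (simp add: algebra_simps)
  also have "\<dots> \<le> 4*n*C * (K*S - n*C)" using key n C by (intro mult_left_mono) auto
  also have "\<dots> \<le> (K*S)^2"
  proof -
    have "0 \<le> (K*S - 2*n*C)^2" by simp
    thus ?thesis by (simp add: power2_eq_square algebra_simps)
  qed
  finally have main: "S3 * D \<le> (K*S)^2" .
  have "sqrt S3 * sqrt D \<le> K * S"
  proof -
    have "sqrt S3 * sqrt D = sqrt (S3 * D)" by (simp add: real_sqrt_mult)
    also have "\<dots> \<le> sqrt ((K*S)^2)" using main by (rule real_sqrt_le_mono)
    also have "\<dots> = K*S" using K Spos by simp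
    finally show ?thesis .
  qed
  hence "sqrt S3 / S \<le> K / sqrt D"
    using Spos Dpos by (simp add: divide_simps mult.commute)
  thus ?thesis unfolding S3_def S_def K_def D_def n_def .
qed

end
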